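(* For every integer $m\geq 4$, the cycle sun $CS_m$ and the wheel sun $WS_m$ satisfy $\eta(CS_m)=\eta(WS_m)=2$.
   Context: All graphs are finite, simple and undirected. Indices are taken modulo $m$, so $u_0=u_m$ and $v_0=v_m$. The cycle sun $CS_m$ has vertices $u_1,\dots,u_m,v_1,\dots,v_m$ and edges $(u_i,u_{i-1})$ and $(u_i,v_{i-1}),(u_i,v_i)$ for all $i\in[m]$ (so the $u_i$ form a cycle and each $v_i$ is adjacent exactly to $u_i$ and $u_{i+1}$). The wheel sun $WS_m$ is obtained from $CS_m$ by adding one further vertex $w$ adjacent to all of $u_1,\dots,u_m$. For a vertex $v$, $N(v)$ is its set of neighbours. For a positive integer $k$, $[k]=\{1,\dots,k\}$. For a labeling $f:V(G)\to[k]$ and $S\subseteq V(G)$, $f(S)=\sum_{u\in S}f(u)$. A labeling $f:V(G)\to[k]$ is an additive $k$-coloring if $f(N(u))\neq f(N(v))$ for every edge $(u,v)$ of $G$. The additive chromatic number $\eta(G)$ is the least $k$ for which $G$ has an additive $k$-coloring. *)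

theory Defs
  imports Main
begin

text \<open>A finite simple graph is given by a vertex set and a symmetric irreflexive
adjacency predicate.\<close>

definition nbrs :: "'a set \<Rightarrow> ('a \<Rightarrow> 'a \<Rightarrow> bool) \<Rightarrow> 'a \<Rightarrow> 'a set" where
  "nbrs Vs E v = {u \<in> Vs. E v u}"

definition additive_coloring ::
  "'a set \<Rightarrow> ('a \<Rightarrow> 'a \<Rightarrow> bool) \<Rightarrow> nat \<Rightarrow> ('a \<Rightarrow> nat) \<Rightarrow> bool" where
  "additive_coloring Vs E k f \<longleftrightarrow>
     (\<forall>v\<in>Vs. f v \<in> {1..k}) \<and>
     (\<forall>u\<in>Vs. \<forall>v\<in>Vs. E u v \<longrightarrow> sum f (nbrs Vs E u) \<noteq> sum f (nbrs Vs E v))"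

definition additive_chromatic_number :: "'a set \<Rightarrow> ('a \<Rightarrow> 'a \<Rightarrow> bool) \<Rightarrow> nat" where
  "additive_chromatic_number Vs E = (LEAST k. k > 0 \<and> (\<exists>f. additive_coloring Vs E k f))"

datatype sunv = Uv nat | Vv nat | Wv

definition cs_verts :: "nat \<Rightarrow> sunv set" where
  "cs_verts m = Uv ` {..<m} \<union> Vv ` {..<m}"

definition ws_verts :: "nat \<Rightarrow> sunv set" where
  "ws_verts m = insert Wv (cs_verts m)"

fun cs_adj :: "nat \<Rightarrow> sunv \<Rightarrow> sunv \<Rightarrow> bool" where
  "cs_adj m (Uv i) (Uv j) = (i < m \<and> j < m \<and> (j = Suc i mod m \<or> i = Suc j mod m))"
| "cs_adj m (Uv i) (Vv j) = (i < m \<and> j < m \<and> (i = j \<or> i = Suc j mod m))"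
| "cs_adj m (Vv j) (Uv i) = (i < m \<and> j < m \<and> (i = j \<or> i = Suc j mod m))"
| "cs_adj m _ _ = False"

definition ws_adj :: "nat \<Rightarrow> sunv \<Rightarrow> sunv \<Rightarrow> bool" where
  "ws_adj m x y \<longleftrightarrow> cs_adj m x y \<or>
     (x = Wv \<and> (\<exists>i<m. y = Uv i)) \<or> (y = Wv \<and> (\<exists>i<m. x = Uv i))"

end

theory Submission
  imports Defs
begin

definition sn :: "nat \<Rightarrow> nat \<Rightarrow> nat" where "sn m i = (if i = m - 1 then 0 else Suc i)"
definition pr :: "nat \<Rightarrow> nat \<Rightarrow> nat" where "pr m i = (if i = 0 then m - 1 else i - 1)"
definition ca :: "nat \<Rightarrow> nat \<Rightarrow> nat" where
 "ca m i = (if odd m \<and> m - 3 \<le> i then (if i = m - 2 then 1 else 2) else (if even i then 1 else 2))"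
definition cb :: "nat \<Rightarrow> nat \<Rightarrow> nat" where
 "cb m i = (if odd m \<and> (i = m - 3 \<or> i = m - 2) then 2 else 1)"
definition SU :: "nat \<Rightarrow> nat \<Rightarrow> nat" where
 "SU m i = ca m (sn m i) + ca m (pr m i) + cb m i + cb m (pr m i)"

definition col :: "nat \<Rightarrow> sunv \<Rightarrow> nat" where
 "col m v = (case v of Uv i \<Rightarrow> ca m i | Vv i \<Rightarrow> cb m i | Wv \<Rightarrow> 1)"

lemma split_mi: assumes "4 \<le> (m::nat)"
  fixes i :: nat obtains r k where "m = 2*r+4 \<or> m = 2*r+5" and "i = 0 \<or> i = 2*k+1 \<or> i = 2*k+2"
proof -
  have "\<exists>r. m = 2*r+4 \<or> m = 2*r+5" using assms by presburger
  moreover have "\<exists>k. i = 0 \<or> i = 2*k+1 \<or> i = 2*k+2" by presburger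
  ultimately show ?thesis using that by blast
qed

lemma K1: assumes m: "4 \<le> m" and i: "i < m" shows "SU m i \<noteq> SU m (sn m i)"
proof -
  obtain r k where "m = 2*r+4 \<or> m = 2*r+5" and "i = 0 \<or> i = 2*k+1 \<or> i = 2*k+2"
    using split_mi[OF m] by metis
  then show ?thesis using i
    by (elim disjE) (auto simp: SU_def sn_def pr_def ca_def cb_def split: if_splits)
qed
lemma K2: assumes m: "4 \<le> m" and i: "i < m" shows "ca m i + ca m (sn m i) \<noteq> SU m i"
proof -
  obtain r k where "m = 2*r+4 \<or> m = 2*r+5" and "i = 0 \<or> i = 2*k+1 \<or> i = 2*k+2"
    using split_mi[OF m] by metis
  then show ?thesis using i
    by (elim disjE) (auto simp: SU_def sn_def pr_def ca_def cb_def split: if_splits)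
qed
lemma K3: assumes m: "4 \<le> m" and i: "i < m" shows "ca m i + ca m (sn m i) \<noteq> SU m (sn m i)"
proof -
  obtain r k where "m = 2*r+4 \<or> m = 2*r+5" and "i = 0 \<or> i = 2*k+1 \<or> i = 2*k+2"
    using split_mi[OF m] by metis
  then show ?thesis using i
    by (elim disjE) (auto simp: SU_def sn_def pr_def ca_def cb_def split: if_splits)
qed

lemma smod: "i < m \<Longrightarrow> Suc i mod m = sn m i"
  unfolding sn_def by (auto simp: Suc_lessI)

lemma sn_lt: "i < m \<Longrightarrow> sn m i < m" unfolding sn_def by auto
lemma pr_lt: "i < m \<Longrightarrow> pr m i < m" unfolding pr_def by auto
lemma sn_pr: "3 \<le> m \<Longrightarrow> i < m \<Longrightarrow> sn m i \<noteq> pr m i" unfolding sn_def pr_def by auto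
lemma i_pr: "2 \<le> m \<Longrightarrow> i < m \<Longrightarrow> i \<noteq> pr m i" unfolding pr_def by auto
lemma i_sn: "2 \<le> m \<Longrightarrow> i < m \<Longrightarrow> i \<noteq> sn m i" unfolding sn_def by auto

lemma cU: "i < m \<Longrightarrow> (j < m \<and> (j = Suc i mod m \<or> i = Suc j mod m)) = (j = sn m i \<or> j = pr m i)"
proof (cases "j < m")
  case True
  assume "i < m"
  then show ?thesis using True by (simp add: smod) (auto simp: sn_def pr_def)
next
  case False
  assume "i < m"
  then show ?thesis using False sn_lt pr_lt by auto
qed

lemma cV: "i < m \<Longrightarrow> (j < m \<and> (i = j \<or> i = Suc j mod m)) = (j = i \<or> j = pr m i)"
proof (cases "j < m")
  case True
  assume "i < m"
  then show ?thesis using True by (simp add: smod) (auto simp: sn_def pr_def)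
next
  case False
  assume "i < m"
  then show ?thesis using False sn_lt pr_lt by auto
qed

lemma cV2: "j < m \<Longrightarrow> (i < m \<and> (i = j \<or> i = Suc j mod m)) = (i = j \<or> i = sn m j)"
  using smod sn_lt by auto

lemma nbrs_cs_U: "3 \<le> m \<Longrightarrow> i < m \<Longrightarrow>
  nbrs (cs_verts m) (cs_adj m) (Uv i) = {Uv (sn m i), Uv (pr m i), Vv i, Vv (pr m i)}"
  unfolding nbrs_def cs_verts_def
  apply (rule set_eqI)
  subgoal for x
    apply (cases x)
    using cU[of i m] cV[of i m] by auto
  done

lemma nbrs_cs_V: "3 \<le> m \<Longrightarrow> i < m \<Longrightarrow>
  nbrs (cs_verts m) (cs_adj m) (Vv i) = {Uv i, Uv (sn m i)}"
  unfolding nbrs_def cs_verts_def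
  apply (rule set_eqI)
  subgoal for x
    apply (cases x)
    using cV2[of i m] by auto
  done

lemma ws_adj_U: "i < m \<Longrightarrow> ws_adj m (Uv i) x = (cs_adj m (Uv i) x \<or> x = Wv)"
  unfolding ws_adj_def by (cases x) auto
lemma ws_adj_V: "ws_adj m (Vv i) x = cs_adj m (Vv i) x"
  unfolding ws_adj_def by (cases x) auto
lemma ws_adj_W: "ws_adj m Wv x = (\<exists>i<m. x = Uv i)"
  unfolding ws_adj_def by (cases x) auto

lemma nbrs_ws_U: "3 \<le> m \<Longrightarrow> i < m \<Longrightarrow>
  nbrs (ws_verts m) (ws_adj m) (Uv i) = insert Wv {Uv (sn m i), Uv (pr m i), Vv i, Vv (pr m i)}"
proof -
  assume a: "3 \<le> m" "i < m"
  have "nbrs (ws_verts m) (ws_adj m) (Uv i) = insert Wv (nbrs (cs_verts m) (cs_adj m) (Uv i))"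
    unfolding nbrs_def ws_verts_def using ws_adj_U[OF a(2)] by auto
  then show ?thesis using nbrs_cs_U[OF a] by simp
qed

lemma nbrs_ws_V: "3 \<le> m \<Longrightarrow> i < m \<Longrightarrow>
  nbrs (ws_verts m) (ws_adj m) (Vv i) = {Uv i, Uv (sn m i)}"
proof -
  assume a: "3 \<le> m" "i < m"
  have "nbrs (ws_verts m) (ws_adj m) (Vv i) = nbrs (cs_verts m) (cs_adj m) (Vv i)"
    unfolding nbrs_def ws_verts_def using ws_adj_V by auto
  then show ?thesis using nbrs_cs_V[OF a] by simp
qed

lemma nbrs_ws_W: "nbrs (ws_verts m) (ws_adj m) Wv = Uv ` {..<m}"
  unfolding nbrs_def ws_verts_def cs_verts_def using ws_adj_W by auto

lemma sum4: "a1 \<noteq> a2 \<Longrightarrow> b1 \<noteq> b2 \<Longrightarrow>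
  sum g {Uv a1, Uv a2, Vv b1, Vv b2} = g (Uv a1) + g (Uv a2) + g (Vv b1) + g (Vv b2)"
  by (simp add: add.assoc)

lemma sum5: "a1 \<noteq> a2 \<Longrightarrow> b1 \<noteq> b2 \<Longrightarrow>
  sum g (insert Wv {Uv a1, Uv a2, Vv b1, Vv b2}) = g Wv + g (Uv a1) + g (Uv a2) + g (Vv b1) + g (Vv b2)"
  by (simp add: add.assoc)

lemma sumW: "sum g (Uv ` {..<m}) = (\<Sum>i<m. g (Uv i))"
  by (subst sum.reindex) (auto simp: inj_on_def)

lemma sum2: "a1 \<noteq> a2 \<Longrightarrow> sum g {Uv a1, Uv a2} = g (Uv a1) + g (Uv a2)"
  by simp

lemma cs_sU: "3 \<le> m \<Longrightarrow> i < m \<Longrightarrow> sum (col m) (nbrs (cs_verts m) (cs_adj m) (Uv i)) = SU m i"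
  using nbrs_cs_U sum4 sn_pr i_pr by (simp add: col_def SU_def)
lemma cs_sV: "3 \<le> m \<Longrightarrow> i < m \<Longrightarrow> sum (col m) (nbrs (cs_verts m) (cs_adj m) (Vv i)) = ca m i + ca m (sn m i)"
  using nbrs_cs_V sum2 i_sn by (simp add: col_def)
lemma ws_sU: "3 \<le> m \<Longrightarrow> i < m \<Longrightarrow> sum (col m) (nbrs (ws_verts m) (ws_adj m) (Uv i)) = SU m i + 1"
  using nbrs_ws_U sum5 sn_pr i_pr by (simp add: col_def SU_def)
lemma ws_sV: "3 \<le> m \<Longrightarrow> i < m \<Longrightarrow> sum (col m) (nbrs (ws_verts m) (ws_adj m) (Vv i)) = ca m i + ca m (sn m i)"
  using nbrs_ws_V sum2 i_sn by (simp add: col_def)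
lemma ws_sW: "sum (col m) (nbrs (ws_verts m) (ws_adj m) Wv) = (\<Sum>i<m. ca m i)"
  unfolding nbrs_ws_W sumW by (simp add: col_def)

lemma cs_adj_UU: "cs_adj m (Uv i) (Uv j) \<Longrightarrow> i < m \<and> j < m \<and> (j = sn m i \<or> i = sn m j)"
  using smod by auto
lemma cs_adj_UV: "cs_adj m (Uv i) (Vv j) \<Longrightarrow> i < m \<and> j < m \<and> (i = j \<or> i = sn m j)"
  using smod by auto

lemma ca_range: "ca m i \<in> {1..2}" by (simp add: ca_def)
lemma cb_range: "cb m i \<in> {1..2}" by (simp add: cb_def)

lemma cs_VU: "cs_adj m (Vv j) (Uv i) = cs_adj m (Uv i) (Vv j)" by simp

lemma col_cs: assumes "4 \<le> m" shows "additive_coloring (cs_verts m) (cs_adj m) 2 (col m)"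
  unfolding additive_coloring_def
proof (intro conjI ballI impI)
  fix v assume "v \<in> cs_verts m"
  then show "col m v \<in> {1..2}" using ca_range cb_range by (cases v) (auto simp: col_def)
next
  fix u v assume u: "u \<in> cs_verts m" and v: "v \<in> cs_verts m" and e: "cs_adj m u v"
  have m3: "3 \<le> m" using assms by simp
  have UU: "SU m i \<noteq> SU m j" if "cs_adj m (Uv i) (Uv j)" for i j
  proof -
    have h: "i < m" "j < m" "j = sn m i \<or> i = sn m j" using cs_adj_UU[OF that] by auto
    from h(3) show ?thesis
    proof
      assume "j = sn m i" then show ?thesis using K1[OF assms h(1)] by simp
    next
      assume "i = sn m j" then show ?thesis using K1[OF assms h(2)] by simp
    qed
  qed
  have UV: "SU m i \<noteq> ca m j + ca m (sn m j)" if "cs_adj m (Uv i) (Vv j)" for i j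
  proof -
    have h: "i < m" "j < m" "i = j \<or> i = sn m j" using cs_adj_UV[OF that] by auto
    from h(3) show ?thesis
    proof
      assume "i = j" then show ?thesis using K2[OF assms h(2)] by simp
    next
      assume "i = sn m j" then show ?thesis using K3[OF assms h(2)] by simp
    qed
  qed
  show "sum (col m) (nbrs (cs_verts m) (cs_adj m) u) \<noteq> sum (col m) (nbrs (cs_verts m) (cs_adj m) v)"
  proof (cases u)
    case (Uv i)
    have i: "i < m" using u Uv by (auto simp: cs_verts_def)
    show ?thesis
    proof (cases v)
      case (Uv j)
      have j: "j < m" using v Uv by (auto simp: cs_verts_def)
      show ?thesis using UU[of i j] e \<open>u = Uv i\<close> Uv cs_sU[OF m3 i] cs_sU[OF m3 j] by simp
    next
      case (Vv j)
      have j: "j < m" using v Vv by (auto simp: cs_verts_def)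
      show ?thesis using UV[of i j] e \<open>u = Uv i\<close> Vv cs_sU[OF m3 i] cs_sV[OF m3 j] by simp
    next
      case Wv then show ?thesis using e \<open>u = Uv i\<close> by simp
    qed
  next
    case (Vv j)
    have j: "j < m" using u Vv by (auto simp: cs_verts_def)
    obtain i where vi: "v = Uv i" using e Vv by (cases v) auto
    have i: "i < m" using v vi by (auto simp: cs_verts_def)
    have e': "cs_adj m (Uv i) (Vv j)" using e Vv vi cs_VU by simp
    show ?thesis using UV[OF e'] Vv vi cs_sU[OF m3 i] cs_sV[OF m3 j] by simp
  next
    case Wv then show ?thesis using e by simp
  qed
qed

definition pp :: "nat \<Rightarrow> nat" where "pp k = (if even k then 1 else 2)"

lemma sum_pp: "(\<Sum>k<n. pp k) = n + n div 2"
  by (induction n) (auto simp: pp_def)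

lemma ca_le: "ca m i \<le> 2" and ca_ge: "1 \<le> ca m i" and cb_le: "cb m i \<le> 2" and cb_ge: "1 \<le> cb m i"
  by (auto simp: ca_def cb_def)

lemma SU_le: "SU m i \<le> 8"
  unfolding SU_def using ca_le[of m "sn m i"] ca_le[of m "pr m i"] cb_le[of m i] cb_le[of m "pr m i"] by linarith

lemma SU_ge: "4 \<le> SU m i \<and> ca m j + ca m (sn m j) \<le> 4"
  unfolding SU_def using ca_ge[of m "sn m i"] ca_ge[of m "pr m i"] cb_ge[of m i] cb_ge[of m "pr m i"]
    ca_le[of m j] ca_le[of m "sn m j"] by linarith

lemma SW_ne: assumes "4 \<le> m" "i < m" shows "(\<Sum>k<m. ca m k) \<noteq> SU m i + 1"
proof (cases "even m")
  case True
  have "(\<Sum>k<m. ca m k) = (\<Sum>k<m. pp k)"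
    by (rule sum.cong) (use True in \<open>auto simp: ca_def pp_def\<close>)
  also have "\<dots> = m + m div 2" by (rule sum_pp)
  finally have S: "(\<Sum>k<m. ca m k) = m + m div 2" .
  show ?thesis
  proof (cases "m \<ge> 8")
    case True then show ?thesis using S SU_le[of m i] by linarith
  next
    case False
    with \<open>even m\<close> assms(1) have "m = 4 \<or> m = 6" by presburger
    then show ?thesis
    proof
      assume m: "m = 4"
      have "i = 0 \<or> i = 1 \<or> i = 2 \<or> i = 3" using assms(2) m by auto
      then show ?thesis using S m by (auto simp: SU_def sn_def pr_def ca_def cb_def)
    next
      assume m: "m = 6"
      have "i = 0 \<or> i = 1 \<or> i = 2 \<or> i = 3 \<or> i = 4 \<or> i = 5" using assms(2) m by auto
      then show ?thesis using S m by (auto simp: SU_def sn_def pr_def ca_def cb_def)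
    qed
  qed
next
  case False
  define n where "n = m - 3"
  have n: "m = n + 3" using assms(1) unfolding n_def by simp
  have h1: "(\<Sum>k<m. ca m k) = (\<Sum>k<n. ca m k) + ca m n + ca m (n+1) + ca m (n+2)"
    unfolding n by (simp add: numeral_3_eq_3)
  have h2: "(\<Sum>k<n. ca m k) = (\<Sum>k<n. pp k)"
    by (rule sum.cong) (use n in \<open>auto simp: ca_def pp_def\<close>)
  have h3: "ca m n + ca m (n+1) + ca m (n+2) = 5" using False n by (simp add: ca_def)
  have S: "(\<Sum>k<m. ca m k) = n + n div 2 + 5" using h1 h2 h3 sum_pp[of n] by linarith
  show ?thesis
  proof (cases "m \<ge> 7")
    case True then show ?thesis using S SU_le[of m i] n by linarith
  next
    case f2: False
    with False assms(1) have m: "m = 5" by presburger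
    have "i = 0 \<or> i = 1 \<or> i = 2 \<or> i = 3 \<or> i = 4" using assms(2) m by auto
    then show ?thesis using S m n by (auto simp: SU_def sn_def pr_def ca_def cb_def)
  qed
qed

lemma col_ws: assumes "4 \<le> m" shows "additive_coloring (ws_verts m) (ws_adj m) 2 (col m)"
  unfolding additive_coloring_def
proof (intro conjI ballI impI)
  fix v assume "v \<in> ws_verts m"
  then show "col m v \<in> {1..2}" using ca_range cb_range by (cases v) (auto simp: col_def)
next
  fix u v assume u: "u \<in> ws_verts m" and v: "v \<in> ws_verts m" and e: "ws_adj m u v"
  have m3: "3 \<le> m" using assms by simp
  have UU: "SU m i \<noteq> SU m j" if "cs_adj m (Uv i) (Uv j)" for i j
  proof -
    have h: "i < m" "j < m" "j = sn m i \<or> i = sn m j" using cs_adj_UU[OF that] by auto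
    from h(3) show ?thesis
    proof
      assume "j = sn m i" then show ?thesis using K1[OF assms h(1)] by simp
    next
      assume "i = sn m j" then show ?thesis using K1[OF assms h(2)] by simp
    qed
  qed
  have UV: "SU m i + 1 \<noteq> ca m j + ca m (sn m j)" for i j
    using SU_ge[of m i j] by linarith
  show "sum (col m) (nbrs (ws_verts m) (ws_adj m) u) \<noteq> sum (col m) (nbrs (ws_verts m) (ws_adj m) v)"
  proof (cases u)
    case (Uv i)
    have i: "i < m" using u Uv by (auto simp: ws_verts_def cs_verts_def)
    show ?thesis
    proof (cases v)
      case (Uv j)
      have j: "j < m" using v Uv by (auto simp: ws_verts_def cs_verts_def)
      have e': "cs_adj m (Uv i) (Uv j)" using e \<open>u = Uv i\<close> Uv unfolding ws_adj_def by simp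
      show ?thesis using UU[OF e'] \<open>u = Uv i\<close> Uv ws_sU[OF m3 i] ws_sU[OF m3 j] by simp
    next
      case (Vv j)
      have j: "j < m" using v Vv by (auto simp: ws_verts_def cs_verts_def)
      show ?thesis using UV[of i j] \<open>u = Uv i\<close> Vv ws_sU[OF m3 i] ws_sV[OF m3 j] by simp
    next
      case Wv
      show ?thesis using SW_ne[OF assms i] \<open>u = Uv i\<close> Wv ws_sU[OF m3 i] ws_sW[of m] by simp
    qed
  next
    case (Vv j)
    have j: "j < m" using u Vv by (auto simp: ws_verts_def cs_verts_def)
    obtain i where vi: "v = Uv i" using e Vv unfolding ws_adj_def by (cases v) auto
    have i: "i < m" using v vi by (auto simp: ws_verts_def cs_verts_def)
    show ?thesis using UV[of i j] Vv vi ws_sU[OF m3 i] ws_sV[OF m3 j] by simp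
  next
    case Wv
    then obtain i where vi: "v = Uv i" "i < m" using e unfolding ws_adj_def by auto
    show ?thesis using SW_ne[OF assms vi(2)] Wv vi ws_sU[OF m3 vi(2)] ws_sW[of m] by simp
  qed
qed

lemma no1_cs: assumes "4 \<le> m" shows "\<not> additive_coloring (cs_verts m) (cs_adj m) 1 f"
proof
  assume c: "additive_coloring (cs_verts m) (cs_adj m) 1 f"
  have m3: "3 \<le> m" using assms by simp
  have one: "\<And>v. v \<in> cs_verts m \<Longrightarrow> f v = 1" using c unfolding additive_coloring_def by auto
  have sU: "sum f (nbrs (cs_verts m) (cs_adj m) (Uv i)) = 4" if "i < m" for i
  proof -
    have "sum f (nbrs (cs_verts m) (cs_adj m) (Uv i)) = f (Uv (sn m i)) + f (Uv (pr m i)) + f (Vv i) + f (Vv (pr m i))"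
      using nbrs_cs_U[OF m3 that] sum4 sn_pr[OF m3 that] i_pr[OF _ that] m3 by simp
    also have "\<dots> = 4" using one sn_lt[OF that] pr_lt[OF that] that by (simp add: cs_verts_def)
    finally show ?thesis .
  qed
  have s01: "sn m 0 = 1" using assms by (simp add: sn_def)
  have "cs_adj m (Uv 0) (Uv 1)" using assms by simp
  moreover have "Uv 0 \<in> cs_verts m" "Uv 1 \<in> cs_verts m" using assms by (auto simp: cs_verts_def)
  ultimately have "sum f (nbrs (cs_verts m) (cs_adj m) (Uv 0)) \<noteq> sum f (nbrs (cs_verts m) (cs_adj m) (Uv 1))"
    using c unfolding additive_coloring_def by blast
  then show False using sU[of 0] sU[of 1] assms by simp
qed

lemma no1_ws: assumes "4 \<le> m" shows "\<not> additive_coloring (ws_verts m) (ws_adj m) 1 f"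
proof
  assume c: "additive_coloring (ws_verts m) (ws_adj m) 1 f"
  have m3: "3 \<le> m" using assms by simp
  have one: "\<And>v. v \<in> ws_verts m \<Longrightarrow> f v = 1" using c unfolding additive_coloring_def by auto
  have sU: "sum f (nbrs (ws_verts m) (ws_adj m) (Uv i)) = 5" if "i < m" for i
  proof -
    have "sum f (nbrs (ws_verts m) (ws_adj m) (Uv i)) = f Wv + f (Uv (sn m i)) + f (Uv (pr m i)) + f (Vv i) + f (Vv (pr m i))"
      using nbrs_ws_U[OF m3 that] sum5 sn_pr[OF m3 that] i_pr[OF _ that] m3 by simp
    also have "\<dots> = 5" using one sn_lt[OF that] pr_lt[OF that] that by (simp add: ws_verts_def cs_verts_def)
    finally show ?thesis .
  qed
  have "ws_adj m (Uv 0) (Uv 1)" using assms by (simp add: ws_adj_def)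
  moreover have "Uv 0 \<in> ws_verts m" "Uv 1 \<in> ws_verts m" using assms by (auto simp: ws_verts_def cs_verts_def)
  ultimately have "sum f (nbrs (ws_verts m) (ws_adj m) (Uv 0)) \<noteq> sum f (nbrs (ws_verts m) (ws_adj m) (Uv 1))"
    using c unfolding additive_coloring_def by blast
  then show False using sU[of 0] sU[of 1] assms by simp
qed

lemma eta2: assumes "additive_coloring Vs E 2 f" "\<And>g. \<not> additive_coloring Vs E 1 g"
  shows "additive_chromatic_number Vs E = 2"
  unfolding additive_chromatic_number_def
proof (rule Least_equality)
  show "0 < (2::nat) \<and> (\<exists>f. additive_coloring Vs E 2 f)" using assms(1) by auto
next
  fix k :: nat assume "0 < k \<and> (\<exists>f. additive_coloring Vs E k f)"
  then show "2 \<le> k" using assms(2) by (cases "k = 1") auto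
qed

theorem mainTheorem13:
  fixes m :: nat
  assumes "m \<ge> 4"
  shows "additive_chromatic_number (cs_verts m) (cs_adj m) = 2 \<and>
         additive_chromatic_number (ws_verts m) (ws_adj m) = 2"
  using eta2[OF col_cs[OF assms] no1_cs[OF assms]] eta2[OF col_ws[OF assms] no1_ws[OF assms]] by simp

end
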